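(* Let $f:\mathbb{R}^m\to\mathbb{R}$ be $C^2$, let $\delta_0,\dots,\delta_m$ be distinct reals, $\tau>0$, $0<\gamma_0<1$, and let $\mathcal{B}\subset\mathbb{R}^m$ be a compact set with $\inf_{x\in\mathcal{B}}\|\nabla f(x)\|>0$. Then: (1) there exists $T>0$ such that $\sup_{x\in\mathcal{B}}\mathrm{sp}(A(x))\le T$ and $\inf_{x\in\mathcal{B}}\mathrm{minsp}(A(x))\ge 1/T$; (2) $\inf_{x\in\mathcal{B}}\gamma(x)>0$.
   Context: For a real symmetric matrix $A$, $\mathrm{sp}(A)$ (resp. $\mathrm{minsp}(A)$) is the maximum (resp. minimum) of $|\lambda|$ over eigenvalues $\lambda$ of $A$. For invertible real symmetric $A$, $pr_{A,\pm}$ is the orthogonal projection onto the span of eigenvectors of $A$ with positive/negative eigenvalues. Let $\kappa:=\frac12\min_{i\ne j}|\delta_i-\delta_j|$. For $x$ with $\nabla f(x)\ne0$: $\delta(x):=\delta_j$ where $j$ is the smallest index in $\{0,\dots,m\}$ with $\mathrm{minsp}(\nabla^2f(x)+\delta_j\|\nabla f(x)\|^{\tau}I)\ge\kappa\|\nabla f(x)\|^{\tau}$; $A(x):=\nabla^2 f(x)+\delta(x)\|\nabla f(x)\|^{\tau}I$; $v(x):=A(x)^{-1}\nabla f(x)$; $w(x):=pr_{A(x),+}v(x)-pr_{A(x),-}v(x)$; and $\gamma(x)$ is the largest element $\gamma$ of $\{\gamma_0,\gamma_0/3,\gamma_0/3^2,\dots\}$ such that $f(x-\gamma w(x))-f(x)\le-\gamma\langle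 w(x),\nabla f(x)\rangle/3$. *)

theory Defs
  imports "HOL-Analysis.Analysis"
begin

definition eigenvalues :: "real^'n^'n \<Rightarrow> real set" where
  "eigenvalues A = {l. \<exists>v. v \<noteq> 0 \<and> A *v v = l *s v}"

definition sp :: "real^'n^'n \<Rightarrow> real" where
  "sp A = Max (abs ` eigenvalues A)"

definition minsp :: "real^'n^'n \<Rightarrow> real" where
  "minsp A = Min (abs ` eigenvalues A)"

definition orth_proj :: "(real^'n) set \<Rightarrow> real^'n \<Rightarrow> real^'n" where
  "orth_proj S v = (THE p. p \<in> S \<and> (\<forall>s\<in>S. (v - p) \<bullet> s = 0))"

definition pr_pos :: "real^'n^'n \<Rightarrow> real^'n \<Rightarrow> real^'n" where
  "pr_pos A = orth_proj (span {v. \<exists>l>0. A *v v = l *s v})"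

definition pr_neg :: "real^'n^'n \<Rightarrow> real^'n \<Rightarrow> real^'n" where
  "pr_neg A = orth_proj (span {v. \<exists>l<0. A *v v = l *s v})"

definition kappa :: "nat \<Rightarrow> (nat \<Rightarrow> real) \<Rightarrow> real" where
  "kappa m d = Min {\<bar>d i - d j\<bar> | i j. i \<le> m \<and> j \<le> m \<and> i \<noteq> j} / 2"

(* H = Hessian, g = gradient of f *)
definition delta_idx :: "(real^'n \<Rightarrow> real^'n^'n) \<Rightarrow> (real^'n \<Rightarrow> real^'n) \<Rightarrow> (nat \<Rightarrow> real) \<Rightarrow> real
    \<Rightarrow> real^'n \<Rightarrow> nat" where
  "delta_idx H g d tau x = (LEAST j. j \<le> CARD('n) \<and>
      minsp (H x + mat (d j * norm (g x) powr tau)) \<ge> kappa CARD('n) d * norm (g x) powr tau)"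

definition Amat :: "(real^'n \<Rightarrow> real^'n^'n) \<Rightarrow> (real^'n \<Rightarrow> real^'n) \<Rightarrow> (nat \<Rightarrow> real) \<Rightarrow> real
    \<Rightarrow> real^'n \<Rightarrow> real^'n^'n" where
  "Amat H g d tau x = H x + mat (d (delta_idx H g d tau x) * norm (g x) powr tau)"

definition vdir :: "(real^'n \<Rightarrow> real^'n^'n) \<Rightarrow> (real^'n \<Rightarrow> real^'n) \<Rightarrow> (nat \<Rightarrow> real) \<Rightarrow> real
    \<Rightarrow> real^'n \<Rightarrow> real^'n" where
  "vdir H g d tau x = matrix_inv (Amat H g d tau x) *v g x"

definition wdir :: "(real^'n \<Rightarrow> real^'n^'n) \<Rightarrow> (real^'n \<Rightarrow> real^'n) \<Rightarrow> (nat \<Rightarrow> real) \<Rightarrow> real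
    \<Rightarrow> real^'n \<Rightarrow> real^'n" where
  "wdir H g d tau x = pr_pos (Amat H g d tau x) (vdir H g d tau x)
                    - pr_neg (Amat H g d tau x) (vdir H g d tau x)"

definition armijo :: "(real^'n \<Rightarrow> real) \<Rightarrow> (real^'n \<Rightarrow> real^'n^'n) \<Rightarrow> (real^'n \<Rightarrow> real^'n)
    \<Rightarrow> (nat \<Rightarrow> real) \<Rightarrow> real \<Rightarrow> real \<Rightarrow> real^'n \<Rightarrow> nat \<Rightarrow> bool" where
  "armijo f H g d tau gamma0 x k =
     (let gm = gamma0 / 3 ^ k; w = wdir H g d tau x in
      f (x - gm *\<^sub>R w) - f x \<le> - gm * (w \<bullet> g x) / 3)"

definition gamma_step :: "(real^'n \<Rightarrow> real) \<Rightarrow> (real^'n \<Rightarrow> real^'n^'n) \<Rightarrow> (real^'n \<Rightarrow> real^'n)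
    \<Rightarrow> (nat \<Rightarrow> real) \<Rightarrow> real \<Rightarrow> real \<Rightarrow> real^'n \<Rightarrow> real" where
  "gamma_step f H g d tau gamma0 x = gamma0 / 3 ^ (LEAST k. armijo f H g d tau gamma0 x k)"

end

theory Submission
  imports Defs
begin



definition sa :: "('a::euclidean_space \<Rightarrow> 'a) \<Rightarrow> bool" where
  "sa F \<longleftrightarrow> linear F \<and> (\<forall>x y. F x \<bullet> y = x \<bullet> F y)"

definition Eig :: "('a::euclidean_space \<Rightarrow> 'a) \<Rightarrow> real set" where
  "Eig F = {l. \<exists>v. v \<noteq> 0 \<and> F v = l *\<^sub>R v}"

lemma eig_orth:
  assumes "sa F" "F x = l *\<^sub>R x" "F y = m *\<^sub>R y" "l \<noteq> m"
  shows "x \<bullet> y = 0"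
proof -
  have "F x \<bullet> y = x \<bullet> F y" using assms(1) by (simp add: sa_def)
  hence "l * (x \<bullet> y) = m * (x \<bullet> y)" using assms(2,3) by simp
  thus ?thesis using assms(4) by simp
qed

lemma eig_finite:
  fixes F :: "'a::euclidean_space \<Rightarrow> 'a"
  assumes "sa F"
  shows "finite (Eig F) \<and> card (Eig F) \<le> DIM('a)"
proof -
  define e where "e l = (SOME v. v \<noteq> 0 \<and> F v = l *\<^sub>R v)" for l
  have e: "e l \<noteq> 0 \<and> F (e l) = l *\<^sub>R e l" if "l \<in> Eig F" for l
  proof -
    have "\<exists>v. v \<noteq> 0 \<and> F v = l *\<^sub>R v" using that unfolding Eig_def by blast
    from someI_ex[OF this] show ?thesis unfolding e_def .
  qed
  have inj: "inj_on e (Eig F)"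
  proof (rule inj_onI)
    fix l m assume lm: "l \<in> Eig F" "m \<in> Eig F" "e l = e m"
    hence "l *\<^sub>R e l = m *\<^sub>R e l" using e[of l] e[of m] by metis
    thus "l = m" using e[OF lm(1)] by simp
  qed
  have "pairwise orthogonal (e ` Eig F)"
    unfolding pairwise_def orthogonal_def
  proof (clarify)
    fix l m assume "l \<in> Eig F" "m \<in> Eig F" "e l \<noteq> e m"
    thus "e l \<bullet> e m = 0" using e eig_orth[OF assms] by metis
  qed
  moreover have "0 \<notin> e ` Eig F" using e by auto
  ultimately have "independent (e ` Eig F)" by (rule pairwise_orthogonal_independent)
  from independent_bound[OF this] have "finite (e ` Eig F)" "card (e ` Eig F) \<le> DIM('a)" by auto
  moreover have "card (e ` Eig F) = card (Eig F)" using card_image[OF inj] .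
  ultimately show ?thesis using finite_imageD[OF _ inj] by simp
qed

lemma aux_ineq:
  fixes lam s a b e zz :: real
  assumes "lam * (1 - 2 * s * a + s^2 * zz) \<le> lam - 2 * s * b + s^2 * e" and zz: "zz = b - lam * a"
  shows "0 \<le> -2 * s * zz + s^2 * (e - lam * zz)"
proof -
  have "-2 * s * zz + s^2 * (e-lam * zz) = (lam - 2 * s * b + s^2 * e) - lam * (1 - 2 * s * a + s^2 * zz)"
    unfolding zz by (simp add: algebra_simps power2_eq_square)
  thus ?thesis using assms(1) by linarith
qed

lemma rayleigh:
  fixes F :: "'a::euclidean_space \<Rightarrow> 'a"
  assumes saF: "sa F" and S: "subspace S" and inv: "\<And>x. x \<in> S \<Longrightarrow> F x \<in> S"
    and ne: "y0 \<in> S" "y0 \<noteq> 0"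
  shows "\<exists>x0\<in>S. norm x0 = 1 \<and> F x0 = (x0 \<bullet> F x0) *\<^sub>R x0 \<and> (\<forall>y\<in>S. (x0 \<bullet> F x0) * (y \<bullet> y) \<le> y \<bullet> F y)"
proof -
  have lin: "linear F" and adj: "\<And>x y. F x \<bullet> y = x \<bullet> F y" using saF by (auto simp: sa_def)
  define K where "K = sphere 0 1 \<inter> S"
  have cK: "compact K" unfolding K_def by (intro compact_Int_closed compact_sphere closed_subspace S)
  have "(1 / norm y0) *\<^sub>R y0 \<in> K" using ne S unfolding K_def by (simp add: subspace_scale)
  hence neK: "K \<noteq> {}" by auto
  have "bounded_linear F" using lin linear_conv_bounded_linear by blast
  hence "continuous_on K F" by (rule linear_continuous_on)
  hence "continuous_on K (\<lambda>y. y \<bullet> F y)" by (intro continuous_intros)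
  from continuous_attains_inf[OF cK neK this] obtain x0 where x0: "x0 \<in> K" "\<And>y. y \<in> K \<Longrightarrow> x0 \<bullet> F x0 \<le> y \<bullet> F y"
    by blast
  define lam where "lam = x0 \<bullet> F x0"
  have x0S: "x0 \<in> S" and nx0: "norm x0 = 1" using x0(1) by (auto simp: K_def)
  have bound: "lam * (y \<bullet> y) \<le> y \<bullet> F y" if yS: "y \<in> S" for y
  proof (cases "y = 0")
    case True thus ?thesis using linear_0[OF lin] by simp
  next
    case False
    define y' where "y' = (1 / norm y) *\<^sub>R y"
    have "y' \<in> K" using False yS S unfolding K_def y'_def by (simp add: subspace_scale)
    hence "lam \<le> y' \<bullet> F y'" using x0 lam_def by auto
    also have "y' \<bullet> F y' = (y \<bullet> F y) / (norm y)^2"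
      unfolding y'_def using linear_scale[OF lin] by (simp add: power2_eq_square)
    finally have "lam * (norm y)^2 \<le> y \<bullet> F y" using False by (simp add: field_simps)
    thus ?thesis by (simp add: power2_norm_eq_inner)
  qed
  define z where "z = F x0 - lam *\<^sub>R x0"
  have zS: "z \<in> S" unfolding z_def using x0S inv S by (simp add: subspace_diff subspace_scale)
  define c where "c = z \<bullet> F z - lam * (z \<bullet> z)"
  have x0x0: "x0 \<bullet> x0 = 1" using nx0 by (simp add: norm_eq_1)
  have key: "0 \<le> - 2 * s * (z \<bullet> z) + s^2 * c" for s
  proof -
    have yS: "x0 - s *\<^sub>R z \<in> S" using x0S zS S by (simp add: subspace_diff subspace_scale)
    have h1: "lam * ((x0 - s *\<^sub>R z) \<bullet> (x0 - s *\<^sub>R z)) \<le> (x0 - s *\<^sub>R z) \<bullet> F (x0 - s *\<^sub>R z)"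
      by (rule bound[OF yS])
    have h2: "(x0 - s *\<^sub>R z) \<bullet> F (x0 - s *\<^sub>R z) = lam - 2 * s * (z \<bullet> F x0) + s^2 * (z \<bullet> F z)"
    proof -
      have "x0 \<bullet> F z = z \<bullet> F x0" using adj[of x0 z] by (simp add: inner_commute)
      moreover have Feq: "F (x0 - s *\<^sub>R z) = F x0 - s *\<^sub>R F z" using linear_diff[OF lin] linear_scale[OF lin] by simp
      ultimately show ?thesis unfolding Feq
        by (simp add: lam_def inner_diff_left inner_diff_right algebra_simps power2_eq_square inner_commute)
    qed
    have h3: "(x0 - s *\<^sub>R z) \<bullet> (x0 - s *\<^sub>R z) = 1 - 2 * s * (z \<bullet> x0) + s^2 * (z \<bullet> z)"
      using x0x0 by (simp add: inner_diff_left inner_diff_right algebra_simps power2_eq_square inner_commute)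
    have h4: "z \<bullet> z = z \<bullet> F x0 - lam * (z \<bullet> x0)" unfolding z_def
      by (simp add: inner_diff_right)
    have "lam * (1 - 2 * s * (z \<bullet> x0) + s^2 * (z \<bullet> z)) \<le> lam - 2 * s * (z \<bullet> F x0) + s^2 * (z \<bullet> F z)"
      using h1 unfolding h2 h3 .
    thus ?thesis unfolding c_def by (rule aux_ineq[OF _ h4])
  qed
  have "z = 0"
  proof (rule ccontr)
    assume "z \<noteq> 0"
    hence zz: "z \<bullet> z > 0" by simp
    define s where "s = (z \<bullet> z) / (\<bar>c\<bar> + 1)"
    have s: "s > 0" using zz by (simp add: s_def add_pos_nonneg)
    have "s * \<bar>c\<bar> < z \<bullet> z" using zz unfolding s_def by (simp add: field_simps)
    hence h: "s * (s * \<bar>c\<bar>) < s * (z \<bullet> z)" using s by (rule mult_strict_left_mono)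
    have "s * (s * c) \<le> s * (s * \<bar>c\<bar>)" using s by (intro mult_left_mono) auto
    moreover have "0 < s * (z \<bullet> z)" using s zz by simp
    ultimately have "s^2 * c < 2 * s * (z \<bullet> z)" using h by (simp add: power2_eq_square)
    thus False using key[of s] by simp
  qed
  hence "F x0 = lam *\<^sub>R x0" by (simp add: z_def)
  thus ?thesis using x0S nx0 bound lam_def by blast
qed



definition Ep :: "('a::euclidean_space \<Rightarrow> 'a) \<Rightarrow> 'a set" where
  "Ep F = {v. \<exists>l>0. F v = l *\<^sub>R v}"
definition En :: "('a::euclidean_space \<Rightarrow> 'a) \<Rightarrow> 'a set" where
  "En F = {v. \<exists>l<0. F v = l *\<^sub>R v}"

lemma span_invariant:
  assumes lin: "linear F" and E: "\<And>e. e \<in> E \<Longrightarrow> \<exists>l. F e = l *\<^sub>R e" and x: "x \<in> span E"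
  shows "F x \<in> span E"
proof -
  have "subspace (F -` span E)" by (intro linear_subspace_vimage lin subspace_span)
  moreover have "E \<subseteq> F -` span E"
  proof
    fix e assume "e \<in> E"
    then obtain l where "F e = l *\<^sub>R e" using E by blast
    thus "e \<in> F -` span E" using \<open>e \<in> E\<close> by (simp add: span_base span_scale)
  qed
  ultimately have "span E \<subseteq> F -` span E" by (rule span_minimal[rotated])
  thus ?thesis using x by auto
qed

lemma span_orth:
  assumes h: "\<And>a b. a \<in> S \<Longrightarrow> b \<in> T \<Longrightarrow> a \<bullet> b = 0" and x: "x \<in> span S" and y: "y \<in> span T"
  shows "x \<bullet> y = 0"
proof -
  have 1: "orthogonal s y" if "s \<in> S" for s
    by (rule orthogonal_to_span[OF y]) (use h that in \<open>auto simp: orthogonal_def\<close>)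
  have "orthogonal y x"
    by (rule orthogonal_to_span[OF x]) (use 1 in \<open>auto simp: orthogonal_def inner_commute\<close>)
  thus ?thesis by (simp add: orthogonal_def inner_commute)
qed

lemma Ep_En_orth:
  assumes "sa F" "a \<in> span (Ep F)" "b \<in> span (En F)"
  shows "a \<bullet> b = 0"
  by (rule span_orth[OF _ assms(2,3)]) (auto simp: Ep_def En_def intro: eig_orth[OF assms(1)])

lemma sa_lin: "sa F \<Longrightarrow> linear F" by (simp add: sa_def)

lemma Ep_inv: "sa F \<Longrightarrow> x \<in> span (Ep F) \<Longrightarrow> F x \<in> span (Ep F)"
  by (rule span_invariant[OF sa_lin]) (auto simp: Ep_def)
lemma En_inv: "sa F \<Longrightarrow> x \<in> span (En F) \<Longrightarrow> F x \<in> span (En F)"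
  by (rule span_invariant[OF sa_lin]) (auto simp: En_def)

lemma complete_decomp:
  fixes F :: "'a::euclidean_space \<Rightarrow> 'a"
  assumes saF: "sa F" and ker: "\<And>v. F v = 0 \<Longrightarrow> v = 0"
  shows "\<exists>a b. a \<in> span (Ep F) \<and> b \<in> span (En F) \<and> v = a + b"
proof -
  have lin: "linear F" and adj: "\<And>x y. F x \<bullet> y = x \<bullet> F y" using saF by (auto simp: sa_def)
  define U where "U = Ep F \<union> En F"
  obtain y z where y: "y \<in> span U" and z: "\<And>w. w \<in> span U \<Longrightarrow> orthogonal z w" and v: "v = y + z"
    using orthogonal_subspace_decomp_exists[of U v] by blast
  define W where "W = {x. \<forall>u\<in>span U. x \<bullet> u = 0}"
  have W: "subspace W" unfolding W_def subspace_def by (auto simp: inner_add_left)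
  have Winv: "F x \<in> W" if "x \<in> W" for x
  proof -
    have "F x \<bullet> u = 0" if "u \<in> span U" for u
    proof -
      have "F u \<in> span U" by (rule span_invariant[OF lin _ that]) (auto simp: U_def Ep_def En_def)
      thus ?thesis using adj \<open>x \<in> W\<close> by (simp add: W_def)
    qed
    thus ?thesis by (simp add: W_def)
  qed
  have zW: "z \<in> W" using z by (simp add: W_def orthogonal_def)
  have "z = 0"
  proof (rule ccontr)
    assume "z \<noteq> 0"
    from rayleigh[OF saF W Winv zW this] obtain x0 where
      x0: "x0 \<in> W" "norm x0 = 1" "F x0 = (x0 \<bullet> F x0) *\<^sub>R x0" by blast
    define lam where "lam = x0 \<bullet> F x0"
    have "lam \<noteq> 0" using x0 ker unfolding lam_def by (metis norm_zero scaleR_zero_left zero_neq_one)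
    have x0l: "F x0 = lam *\<^sub>R x0" using x0(3) lam_def by simp
    have "x0 \<in> U"
    proof (cases "lam > 0")
      case True thus ?thesis using x0l unfolding U_def Ep_def by blast
    next
      case False hence "lam < 0" using \<open>lam \<noteq> 0\<close> by simp
      thus ?thesis using x0l unfolding U_def En_def by blast
    qed
    hence "x0 \<bullet> x0 = 0" using x0(1) by (auto simp: W_def span_base)
    thus False using x0(2) by simp
  qed
  hence "v \<in> span U" using v y by simp
  thus ?thesis unfolding U_def span_Un by blast
qed

lemma orth_proj_eq:
  assumes S: "subspace S" and p: "p \<in> S" "\<And>s. s \<in> S \<Longrightarrow> (v - p) \<bullet> s = 0"
  shows "orth_proj S v = p"
  unfolding orth_proj_def
proof (rule the_equality)
  show "p \<in> S \<and> (\<forall>s\<in>S. (v - p) \<bullet> s = 0)" using p by auto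
next
  fix q assume q: "q \<in> S \<and> (\<forall>s\<in>S. (v - q) \<bullet> s = 0)"
  have pq: "p - q \<in> S" using p q S by (simp add: subspace_diff)
  have "(p - q) \<bullet> (p - q) = (v - q) \<bullet> (p - q) - (v - p) \<bullet> (p - q)"
    by (simp add: inner_diff_left)
  also have "\<dots> = 0" using q p(2)[OF pq] pq by auto
  finally show "q = p" by simp
qed

lemma neg_eq_scale: "(- F v = l *\<^sub>R (v::'a::real_vector)) = (F v = (-l) *\<^sub>R v)"
  by (auto simp: minus_equation_iff[of "F v"] eq_commute[of "F v"])

lemma ex_neg_scale: "(\<exists>l>0. F v = (- l) *\<^sub>R (v::'a::real_vector)) = (\<exists>l<0. F v = l *\<^sub>R v)"
proof
  assume "\<exists>l>0. F v = (- l) *\<^sub>R v" then obtain l where "l > 0" "F v = (-l) *\<^sub>R v" by blast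
  thus "\<exists>l<0. F v = l *\<^sub>R v" by (intro exI[of _ "-l"]) auto
next
  assume "\<exists>l<0. F v = l *\<^sub>R v" then obtain l where "l < 0" "F v = l *\<^sub>R v" by blast
  thus "\<exists>l>0. F v = (-l) *\<^sub>R v" by (intro exI[of _ "-l"]) auto
qed

lemma Vp_neg: "Ep (\<lambda>x. - F x) = En F"
  unfolding Ep_def En_def neg_eq_scale ex_neg_scale ..

lemma sa_neg: "sa F \<Longrightarrow> sa (\<lambda>x. - F x)"
  by (auto simp: sa_def linear_compose_neg)

lemma posdef:
  fixes F :: "'a::euclidean_space \<Rightarrow> 'a"
  assumes saF: "sa F" and mu: "\<And>l. l \<in> Eig F \<Longrightarrow> mu \<le> \<bar>l\<bar>" "mu > 0"
    and a: "a \<in> span (Ep F)"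
  shows "mu * (a \<bullet> a) \<le> a \<bullet> F a"
proof (cases "\<exists>y\<in>span (Ep F). y \<noteq> 0")
  case False thus ?thesis using a by auto
next
  case True
  then obtain y0 where y0: "y0 \<in> span (Ep F)" "y0 \<noteq> 0" by blast
  from rayleigh[OF saF subspace_span Ep_inv[OF saF] y0] obtain x0 where
    x0: "x0 \<in> span (Ep F)" "norm x0 = 1" "F x0 = (x0 \<bullet> F x0) *\<^sub>R x0"
        "\<forall>y\<in>span (Ep F). (x0 \<bullet> F x0) * (y \<bullet> y) \<le> y \<bullet> F y" by blast
  define lam where "lam = x0 \<bullet> F x0"
  have x0n: "x0 \<noteq> 0" using x0(2) by auto
  have "lam \<in> Eig F" using x0(3) x0n unfolding Eig_def lam_def by blast
  hence ml: "mu \<le> \<bar>lam\<bar>" by (rule mu)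
  have "\<not> lam < 0"
  proof
    assume "lam < 0"
    hence "x0 \<in> En F" using x0(3) unfolding En_def lam_def by blast
    hence "x0 \<bullet> x0 = 0" using Ep_En_orth[OF saF x0(1) span_base] by blast
    thus False using x0n by simp
  qed
  hence "mu \<le> lam" using ml by simp
  moreover have "lam * (a \<bullet> a) \<le> a \<bullet> F a" using x0(4)[folded lam_def] a by blast
  moreover have "mu * (a \<bullet> a) \<le> lam * (a \<bullet> a)" using \<open>mu \<le> lam\<close> by (rule mult_right_mono) simp
  ultimately show ?thesis by linarith
qed


lemma negdef:
  fixes F :: "'a::euclidean_space \<Rightarrow> 'a"
  assumes saF: "sa F" and mu: "\<And>l. l \<in> Eig F \<Longrightarrow> mu \<le> \<bar>l\<bar>" "mu > 0"
    and b: "b \<in> span (En F)"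
  shows "mu * (b \<bullet> b) \<le> - (b \<bullet> F b)"
proof -
  have mu': "mu \<le> \<bar>l\<bar>" if "l \<in> Eig (\<lambda>x. - F x)" for l
  proof -
    have "\<exists>v. v \<noteq> 0 \<and> - F v = l *\<^sub>R v" using that by (simp add: Eig_def)
    then obtain v where "v \<noteq> 0" "- F v = l *\<^sub>R v" by blast
    hence "F v = (- l) *\<^sub>R v" by (simp add: neg_eq_scale)
    hence "- l \<in> Eig F" using \<open>v \<noteq> 0\<close> unfolding Eig_def by blast
    from mu(1)[OF this] show ?thesis by simp
  qed
  have b': "b \<in> span (Ep (\<lambda>x. - F x))" unfolding Vp_neg by (rule b)
  have "mu * (b \<bullet> b) \<le> b \<bullet> (- F b)"
    by (rule posdef[OF sa_neg[OF saF] _ mu(2) b']) (rule mu')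
  thus ?thesis by simp
qed



lemma mat_mulv: "(mat c :: real^'n^'n) *v x = c *\<^sub>R x"
proof -
  have "(\<Sum>j\<in>UNIV. (if i = j then c else 0) * x $ j) = c * x $ i" for i
  proof -
    have "(\<Sum>j\<in>UNIV. (if i = j then c else 0) * x $ j) = (\<Sum>j\<in>UNIV. if i = j then c * x $ j else 0)"
      by (rule sum.cong) auto
    thus ?thesis by simp
  qed
  thus ?thesis by (simp add: vec_eq_iff matrix_vector_mult_def mat_def if_distrib[of "\<lambda>f. f _"] cong: if_cong)
qed

lemma shift_mulv: "((M::real^'n^'n) + mat c) *v x = M *v x + c *\<^sub>R x"
  by (simp add: matrix_vector_mult_add_rdistrib mat_mulv)

lemma eigenvalues_Eig: "eigenvalues M = Eig ((*v) M)"
  unfolding eigenvalues_def Eig_def scalar_mult_eq_scaleR ..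

lemma pr_pos_eq: "pr_pos M = orth_proj (span (Ep ((*v) M)))"
  unfolding pr_pos_def Ep_def scalar_mult_eq_scaleR ..
lemma pr_neg_eq: "pr_neg M = orth_proj (span (En ((*v) M)))"
  unfolding pr_neg_def En_def scalar_mult_eq_scaleR ..

lemma sa_mat: "sa ((*v) (M::real^'n^'n)) \<longleftrightarrow> (\<forall>x y. (M *v x) \<bullet> y = x \<bullet> (M *v y))"
  using matrix_vector_mul_linear[of M] by (simp add: sa_def)

lemma sa_shift: "sa ((*v) M) \<Longrightarrow> sa ((*v) ((M::real^'n^'n) + mat c))"
  unfolding sa_mat shift_mulv by (simp add: inner_add_left inner_add_right)

lemma eig_props:
  fixes M :: "real^'n^'n"
  assumes "sa ((*v) M)"
  shows "finite (eigenvalues M) \<and> eigenvalues M \<noteq> {} \<and> card (eigenvalues M) \<le> CARD('n)"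
proof -
  have fc: "finite (eigenvalues M) \<and> card (eigenvalues M) \<le> CARD('n)"
    using eig_finite[OF assms] unfolding eigenvalues_Eig by simp
  obtain i :: 'n where True by blast
  have "axis i (1::real) \<noteq> 0" by (simp add: axis_eq_0_iff)
  from rayleigh[OF assms subspace_UNIV _ _ this] obtain x0 :: "real^'n" where
    x0: "norm x0 = 1" "M *v x0 = (x0 \<bullet> (M *v x0)) *\<^sub>R x0" by auto
  have "x0 \<noteq> 0" using x0(1) by auto
  hence "(x0 \<bullet> (M *v x0)) \<in> eigenvalues M" using x0(2) unfolding eigenvalues_Eig Eig_def by auto
  thus ?thesis using fc by auto
qed

lemma eig_shift: "eigenvalues ((M::real^'n^'n) + mat c) = (\<lambda>l. l + c) ` eigenvalues M"
proof -
  have "(M *v v + c *\<^sub>R v = l *\<^sub>R v) \<longleftrightarrow> (M *v v = (l - c) *\<^sub>R v)" for v :: "real^'n" and l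
    by (auto simp: algebra_simps)
  hence "eigenvalues (M + mat c) = {l. l - c \<in> eigenvalues M}"
    unfolding eigenvalues_Eig Eig_def shift_mulv by auto
  also have "\<dots> = (\<lambda>l. l + c) ` eigenvalues M"
  proof (rule set_eqI, rule iffI)
    fix l assume "l \<in> {l. l - c \<in> eigenvalues M}"
    thus "l \<in> (\<lambda>l. l + c) ` eigenvalues M" by (intro image_eqI[of _ _ "l - c"]) auto
  qed auto
  finally show ?thesis .
qed

lemma eig_bound:
  fixes M :: "real^'n^'n"
  assumes "l \<in> eigenvalues M" "\<And>x. norm (M *v x) \<le> K * norm x"
  shows "\<bar>l\<bar> \<le> K"
proof -
  obtain v where v: "v \<noteq> 0" "M *v v = l *\<^sub>R v" using assms(1) unfolding eigenvalues_Eig Eig_def by auto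
  have "\<bar>l\<bar> * norm v \<le> K * norm v" using assms(2)[of v] v(2) by simp
  thus ?thesis using v(1) by simp
qed

lemma dir_props:
  fixes M :: "real^'n^'n" and gv :: "real^'n"
  assumes saM: "sa ((*v) M)" and mu: "mu > 0" "\<And>l. l \<in> eigenvalues M \<Longrightarrow> mu \<le> \<bar>l\<bar>"
  defines "v \<equiv> matrix_inv M *v gv"
  defines "w \<equiv> pr_pos M v - pr_neg M v"
  shows "M *v v = gv" "mu * (v \<bullet> v) \<le> w \<bullet> gv" "norm w = norm v" "mu * norm v \<le> norm gv"
proof -
  define F where "F = (*v) M"
  have saF: "sa F" using saM F_def by simp
  have muF: "\<And>l. l \<in> Eig F \<Longrightarrow> mu \<le> \<bar>l\<bar>" using mu(2) unfolding F_def eigenvalues_Eig .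
  have ker: "x = 0" if "M *v x = 0" for x
  proof (rule ccontr)
    assume "x \<noteq> 0"
    hence "0 \<in> eigenvalues M" using that unfolding eigenvalues_Eig Eig_def by auto
    thus False using mu by fastforce
  qed
  have "invertible M" unfolding invertible_left_inverse matrix_left_invertible_ker using ker by blast
  then obtain A' where "M ** A' = mat 1 \<and> A' ** M = mat 1" unfolding invertible_def by blast
  hence "M ** matrix_inv M = mat 1" unfolding matrix_inv_def by (rule someI2) auto
  thus Mv: "M *v v = gv" unfolding v_def by (simp add: matrix_vector_mul_assoc)
  obtain a b where ab: "a \<in> span (Ep F)" "b \<in> span (En F)" "v = a + b"
    using complete_decomp[OF saF, of v] ker unfolding F_def by blast
  have orth: "\<And>a b. a \<in> span (Ep F) \<Longrightarrow> b \<in> span (En F) \<Longrightarrow> a \<bullet> b = 0"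
    by (rule Ep_En_orth[OF saF])
  have pa: "pr_pos M v = a"
    unfolding pr_pos_eq F_def[symmetric]
  proof (rule orth_proj_eq[OF subspace_span ab(1)])
    fix s assume s: "s \<in> span (Ep F)"
    show "(v - a) \<bullet> s = 0" using orth[OF s ab(2)] ab(3) by (simp add: inner_commute)
  qed
  have pb: "pr_neg M v = b"
    unfolding pr_neg_eq F_def[symmetric]
  proof (rule orth_proj_eq[OF subspace_span ab(2)])
    fix s assume s: "s \<in> span (En F)"
    show "(v - b) \<bullet> s = 0" using orth[OF ab(1) s] ab(3) by (simp add: inner_commute)
  qed
  have wab: "w = a - b" unfolding w_def pa pb ..
  have ab0: "a \<bullet> b = 0" using orth ab by blast
  have vv: "v \<bullet> v = a \<bullet> a + b \<bullet> b" using ab0 unfolding ab(3) by (simp add: inner_add_left inner_add_right inner_commute)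
  have ww: "w \<bullet> w = a \<bullet> a + b \<bullet> b" using ab0 unfolding wab by (simp add: inner_diff_left inner_diff_right inner_commute)
  thus "norm w = norm v" using vv by (simp add: norm_eq_sqrt_inner)
  have lin: "linear F" using saF by (simp add: sa_def)
  have Fa: "F a \<in> span (Ep F)" by (rule Ep_inv[OF saF ab(1)])
  have Fb: "F b \<in> span (En F)" by (rule En_inv[OF saF ab(2)])
  have c1: "a \<bullet> F b = 0" by (rule orth[OF ab(1) Fb])
  have c2: "b \<bullet> F a = 0" using orth[OF Fa ab(2)] by (simp add: inner_commute)
  have "gv = F a + F b" using Mv unfolding F_def[symmetric] ab(3) linear_add[OF lin] by simp
  hence "w \<bullet> gv = a \<bullet> F a - b \<bullet> F b" unfolding wab using c1 c2
    by (simp add: inner_diff_left inner_add_right)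
  moreover have "mu * (a \<bullet> a) \<le> a \<bullet> F a" by (rule posdef[OF saF muF mu(1) ab(1)])
  moreover have "mu * (b \<bullet> b) \<le> - (b \<bullet> F b)" by (rule negdef[OF saF muF mu(1) ab(2)])
  ultimately show wg: "mu * (v \<bullet> v) \<le> w \<bullet> gv" unfolding vv by (simp add: algebra_simps)
  have "w \<bullet> gv \<le> norm w * norm gv" by (rule norm_cauchy_schwarz)
  hence "mu * (norm v)^2 \<le> norm v * norm gv" using wg \<open>norm w = norm v\<close> by (simp add: power2_norm_eq_inner)
  thus "mu * norm v \<le> norm gv"
    by (cases "norm v = 0") (auto simp: power2_eq_square mult.assoc[symmetric] mult_le_cancel_right)
qed



lemma mulv_inner_eq: "((A::real^'n^'n) *v v) \<bullet> u = A \<bullet> (\<chi> i. u $ i *\<^sub>R v)"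
  by (simp add: inner_vec_def matrix_vector_mult_def sum_distrib_left mult_ac)

lemma D1:
  fixes f :: "real^'n \<Rightarrow> real" and g :: "real^'n \<Rightarrow> real^'n"
  assumes grad: "\<And>x. (f has_derivative (\<lambda>h. g x \<bullet> h)) (at x)"
  shows "((\<lambda>s. f (p + s *\<^sub>R u)) has_real_derivative (g (p + s *\<^sub>R u) \<bullet> u)) (at s)"
proof -
  have l: "((\<lambda>s. p + s *\<^sub>R u) has_derivative (\<lambda>h. h *\<^sub>R u)) (at s)"
    by (auto intro!: derivative_eq_intros)
  have "((\<lambda>s. f (p + s *\<^sub>R u)) has_derivative (\<lambda>h. g (p + s *\<^sub>R u) \<bullet> (h *\<^sub>R u))) (at s)"
    using diff_chain_at[OF l grad] by (simp add: o_def)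
  thus ?thesis unfolding has_field_derivative_def
    by (rule has_derivative_eq_rhs) (simp add: fun_eq_iff mult.commute)
qed

lemma D2:
  fixes g :: "real^'n \<Rightarrow> real^'n" and H :: "real^'n \<Rightarrow> real^'n^'n"
  assumes hess: "\<And>x. (g has_derivative (\<lambda>h. H x *v h)) (at x)"
  shows "((\<lambda>s. g (p + s *\<^sub>R u) \<bullet> w) has_real_derivative ((H (p + s *\<^sub>R u) *v u) \<bullet> w)) (at s)"
proof -
  have l: "((\<lambda>s. p + s *\<^sub>R u) has_derivative (\<lambda>h. h *\<^sub>R u)) (at s)"
    by (auto intro!: derivative_eq_intros)
  have "((\<lambda>s. g (p + s *\<^sub>R u)) has_derivative (\<lambda>h. H (p + s *\<^sub>R u) *v (h *\<^sub>R u))) (at s)"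
    using diff_chain_at[OF l hess] by (simp add: o_def)
  hence "((\<lambda>s. g (p + s *\<^sub>R u) \<bullet> w) has_derivative (\<lambda>h. (H (p + s *\<^sub>R u) *v (h *\<^sub>R u)) \<bullet> w)) (at s)"
    by (auto intro!: derivative_eq_intros)
  thus ?thesis unfolding has_field_derivative_def
    by (rule has_derivative_eq_rhs) (simp add: fun_eq_iff matrix_vector_mult_scaleR mult.commute)
qed

lemma mixed:
  fixes f :: "real^'n \<Rightarrow> real" and g :: "real^'n \<Rightarrow> real^'n" and H :: "real^'n \<Rightarrow> real^'n^'n"
  assumes grad: "\<And>x. (f has_derivative (\<lambda>h. g x \<bullet> h)) (at x)"
    and hess: "\<And>x. (g has_derivative (\<lambda>h. H x *v h)) (at x)"
    and s: "s > 0"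
  shows "\<exists>r q. 0 < r \<and> r < s \<and> 0 < q \<and> q < s \<and>
     f (x + s *\<^sub>R b + s *\<^sub>R a) - f (x + s *\<^sub>R a) - f (x + s *\<^sub>R b) + f x
       = s * (s * ((H (x + r *\<^sub>R a + q *\<^sub>R b) *v b) \<bullet> a))"
proof -
  define \<phi> where "\<phi> r = f ((x + s *\<^sub>R b) + r *\<^sub>R a) - f (x + r *\<^sub>R a)" for r
  have d\<phi>: "(\<phi> has_real_derivative (g ((x + s *\<^sub>R b) + r *\<^sub>R a) \<bullet> a - g (x + r *\<^sub>R a) \<bullet> a)) (at r)" for r
    unfolding \<phi>_def by (intro derivative_intros D1[OF grad])
  obtain r where r: "0 < r" "r < s" "\<phi> s - \<phi> 0 = (s - 0) * (g ((x + s *\<^sub>R b) + r *\<^sub>R a) \<bullet> a - g (x + r *\<^sub>R a) \<bullet> a)"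
    using MVT2[OF s d\<phi>] by blast
  define \<psi> where "\<psi> q = g ((x + r *\<^sub>R a) + q *\<^sub>R b) \<bullet> a" for q
  have d\<psi>: "(\<psi> has_real_derivative ((H ((x + r *\<^sub>R a) + q *\<^sub>R b) *v b) \<bullet> a)) (at q)" for q
    unfolding \<psi>_def by (rule D2[OF hess])
  obtain q where q: "0 < q" "q < s" "\<psi> s - \<psi> 0 = (s - 0) * ((H ((x + r *\<^sub>R a) + q *\<^sub>R b) *v b) \<bullet> a)"
    using MVT2[OF s d\<psi>] by blast
  have e1: "(x + s *\<^sub>R b) + r *\<^sub>R a = (x + r *\<^sub>R a) + s *\<^sub>R b" by (simp add: algebra_simps)
  have "\<phi> s - \<phi> 0 = f (x + s *\<^sub>R b + s *\<^sub>R a) - f (x + s *\<^sub>R a) - f (x + s *\<^sub>R b) + f x"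
    unfolding \<phi>_def by simp
  moreover have "g ((x + s *\<^sub>R b) + r *\<^sub>R a) \<bullet> a - g (x + r *\<^sub>R a) \<bullet> a = \<psi> s - \<psi> 0"
    unfolding \<psi>_def e1 by simp
  ultimately have "f (x + s *\<^sub>R b + s *\<^sub>R a) - f (x + s *\<^sub>R a) - f (x + s *\<^sub>R b) + f x
       = s * (s * ((H (x + r *\<^sub>R a + q *\<^sub>R b) *v b) \<bullet> a))" using r(3) q(3) by simp
  thus ?thesis using r q by blast
qed

lemma limit_eq:
  fixes k l :: "real^'n \<Rightarrow> real"
  assumes k: "isCont k x" and l: "isCont l x" and C: "C \<ge> 0"
    and h: "\<And>s. s > 0 \<Longrightarrow> \<exists>p1 p2. dist p1 x \<le> s * C \<and> dist p2 x \<le> s * C \<and> k p1 = l p2"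
  shows "k x = l x"
proof (rule ccontr)
  assume ne: "k x \<noteq> l x"
  define e where "e = \<bar>k x - l x\<bar> / 2"
  have e: "e > 0" using ne by (simp add: e_def)
  obtain d1 where d1: "d1 > 0" "\<And>p. dist p x < d1 \<Longrightarrow> dist (k p) (k x) < e"
    using k e unfolding continuous_at_eps_delta by blast
  obtain d2 where d2: "d2 > 0" "\<And>p. dist p x < d2 \<Longrightarrow> dist (l p) (l x) < e"
    using l e unfolding continuous_at_eps_delta by blast
  define s where "s = min d1 d2 / (2 * (C + 1))"
  have s: "s > 0" using d1 d2 C by (simp add: s_def)
  have sC: "s * C < min d1 d2"
  proof -
    have "s * C \<le> s * (C + 1) / 1" using s by simp
    also have "s * (C + 1) = min d1 d2 / 2" using C unfolding s_def by (simp add: field_simps)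
    also have "\<dots> < min d1 d2" using d1(1) d2(1) by (simp add: min_def)
    finally show ?thesis by simp
  qed
  obtain p1 p2 where p: "dist p1 x \<le> s * C" "dist p2 x \<le> s * C" "k p1 = l p2" using h[OF s] by blast
  have "dist (k p1) (k x) < e" using d1(2) p(1) sC by simp
  moreover have "dist (l p2) (l x) < e" using d2(2) p(2) sC by simp
  ultimately have "\<bar>k x - l x\<bar> < 2 * e" using p(3) by (simp add: dist_real_def)
  thus False unfolding e_def by simp
qed

lemma hess_sym:
  fixes f :: "real^'n \<Rightarrow> real" and g :: "real^'n \<Rightarrow> real^'n" and H :: "real^'n \<Rightarrow> real^'n^'n"
  assumes grad: "\<And>x. (f has_derivative (\<lambda>h. g x \<bullet> h)) (at x)"
    and hess: "\<And>x. (g has_derivative (\<lambda>h. H x *v h)) (at x)"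
    and cont: "continuous_on UNIV H"
  shows "(H x *v u) \<bullet> v = u \<bullet> (H x *v v)"
proof -
  have cH: "isCont H x" using cont by (simp add: continuous_on_eq_continuous_at)
  define k where "k p = (H p *v v) \<bullet> u" for p
  define l where "l p = (H p *v u) \<bullet> v" for p
  have ck: "isCont k x" unfolding k_def mulv_inner_eq by (intro continuous_intros cH)
  have cl: "isCont l x" unfolding l_def mulv_inner_eq by (intro continuous_intros cH)
  have "k x = l x"
  proof (rule limit_eq[OF ck cl, of "norm u + norm v"])
    fix s :: real assume s: "s > 0"
    obtain r q where rq: "0 < r" "r < s" "0 < q" "q < s"
      "f (x + s *\<^sub>R v + s *\<^sub>R u) - f (x + s *\<^sub>R u) - f (x + s *\<^sub>R v) + f x
       = s * (s * ((H (x + r *\<^sub>R u + q *\<^sub>R v) *v v) \<bullet> u))"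
      using mixed[OF grad hess s, of x v u] by blast
    obtain r' q' where rq': "0 < r'" "r' < s" "0 < q'" "q' < s"
      "f (x + s *\<^sub>R u + s *\<^sub>R v) - f (x + s *\<^sub>R v) - f (x + s *\<^sub>R u) + f x
       = s * (s * ((H (x + r' *\<^sub>R v + q' *\<^sub>R u) *v u) \<bullet> v))"
      using mixed[OF grad hess s, of x u v] by blast
    have xe: "x + s *\<^sub>R v + s *\<^sub>R u = x + s *\<^sub>R u + s *\<^sub>R v" by (simp add: algebra_simps)
    have "f (x + s *\<^sub>R v + s *\<^sub>R u) - f (x + s *\<^sub>R u) - f (x + s *\<^sub>R v) + f x =
          f (x + s *\<^sub>R u + s *\<^sub>R v) - f (x + s *\<^sub>R v) - f (x + s *\<^sub>R u) + f x"
      unfolding xe by simp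
    hence "s * (s * k (x + r *\<^sub>R u + q *\<^sub>R v)) = s * (s * l (x + r' *\<^sub>R v + q' *\<^sub>R u))"
      unfolding k_def l_def rq(5) rq'(5) .
    hence eq: "k (x + r *\<^sub>R u + q *\<^sub>R v) = l (x + r' *\<^sub>R v + q' *\<^sub>R u)" using s by simp
    have bnd: "dist (x + a *\<^sub>R w1 + b *\<^sub>R w2) x \<le> s * (norm w1 + norm w2)"
      if "0 < a" "a < s" "0 < b" "b < s" for a b and w1 w2 :: "real^'n"
    proof -
      have "dist (x + a *\<^sub>R w1 + b *\<^sub>R w2) x = norm (a *\<^sub>R w1 + b *\<^sub>R w2)" by (simp add: dist_norm)
      also have "\<dots> \<le> a * norm w1 + b * norm w2"
        using norm_triangle_ineq[of "a *\<^sub>R w1" "b *\<^sub>R w2"] that by simp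
      also have "\<dots> \<le> s * norm w1 + s * norm w2"
        using that by (intro add_mono mult_right_mono) auto
      finally show ?thesis by (simp add: algebra_simps)
    qed
    have b1: "dist (x + r *\<^sub>R u + q *\<^sub>R v) x \<le> s * (norm u + norm v)" by (rule bnd[OF rq(1-4)])
    have "dist (x + r' *\<^sub>R v + q' *\<^sub>R u) x \<le> s * (norm v + norm u)" by (rule bnd[OF rq'(1-4)])
    hence b2: "dist (x + r' *\<^sub>R v + q' *\<^sub>R u) x \<le> s * (norm u + norm v)" by (simp add: add.commute)
    show "\<exists>p1 p2. dist p1 x \<le> s * (norm u + norm v) \<and> dist p2 x \<le> s * (norm u + norm v) \<and> k p1 = l p2"
      using b1 b2 eq by blast
  qed simp
  thus ?thesis unfolding k_def l_def by (simp add: inner_commute)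
qed



lemma kappa_props:
  assumes inj: "inj_on d {0..m}" and m: "m \<ge> 1"
  shows "kappa m d > 0" "\<And>i j. i \<le> m \<Longrightarrow> j \<le> m \<Longrightarrow> i \<noteq> j \<Longrightarrow> 2 * kappa m d \<le> \<bar>d i - d j\<bar>"
proof -
  define K where "K = {\<bar>d i - d j\<bar> | i j. i \<le> m \<and> j \<le> m \<and> i \<noteq> j}"
  have "K \<subseteq> (\<lambda>(i,j). \<bar>d i - d j\<bar>) ` ({..m} \<times> {..m})" unfolding K_def by auto
  hence fin: "finite K" by (rule finite_subset) auto
  have "\<bar>d 0 - d 1\<bar> \<in> K" using m unfolding K_def by force
  hence ne: "K \<noteq> {}" by auto
  have pos: "k > 0" if kK: "k \<in> K" for k
  proof -
    obtain i j where "k = \<bar>d i - d j\<bar>" "i \<le> m" "j \<le> m" "i \<noteq> j" using kK unfolding K_def by blast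
    moreover have "d i \<noteq> d j" using inj calculation unfolding inj_on_def by auto
    ultimately show ?thesis by simp
  qed
  have kd: "kappa m d = Min K / 2" unfolding kappa_def K_def ..
  show "kappa m d > 0" unfolding kd using pos fin ne by simp
  fix i j assume "i \<le> m" "j \<le> m" "i \<noteq> j"
  hence "\<bar>d i - d j\<bar> \<in> K" unfolding K_def by blast
  hence "Min K \<le> \<bar>d i - d j\<bar>" using fin by simp
  thus "2 * kappa m d \<le> \<bar>d i - d j\<bar>" unfolding kd by simp
qed

lemma minsp_ge_iff:
  fixes M :: "real^'n^'n"
  assumes "sa ((*v) M)"
  shows "c \<le> minsp M \<longleftrightarrow> (\<forall>l\<in>eigenvalues M. c \<le> \<bar>l\<bar>)"
  using eig_props[OF assms] unfolding minsp_def by (simp add: Min_ge_iff)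

lemma sp_le_iff:
  fixes M :: "real^'n^'n"
  assumes "sa ((*v) M)"
  shows "sp M \<le> c \<longleftrightarrow> (\<forall>l\<in>eigenvalues M. \<bar>l\<bar> \<le> c)"
  using eig_props[OF assms] unfolding sp_def by (simp add: Max_le_iff)

lemma delta_exists:
  fixes M :: "real^'n^'n"
  assumes saM: "sa ((*v) M)" and t: "t > 0" and inj: "inj_on d {0..CARD('n)}"
  shows "\<exists>j. j \<le> CARD('n) \<and> minsp (M + mat (d j * t)) \<ge> kappa CARD('n) d * t"
proof (rule ccontr)
  define m where "m = CARD('n)"
  have m1: "m \<ge> 1" unfolding m_def by (simp add: Suc_leI)
  have inj': "inj_on d {0..m}" using inj m_def by simp
  note kp = kappa_props[OF inj' m1]
  assume "\<not> ?thesis"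
  hence bad: "\<And>j. j \<le> m \<Longrightarrow> \<not> kappa m d * t \<le> minsp (M + mat (d j * t))" unfolding m_def by blast
  have "\<exists>mu. mu \<in> eigenvalues M \<and> \<bar>mu + d j * t\<bar> < kappa m d * t" if j: "j \<le> m" for j
  proof -
    have "\<exists>l\<in>eigenvalues (M + mat (d j * t)). \<bar>l\<bar> < kappa m d * t"
      using bad[OF j] unfolding minsp_ge_iff[OF sa_shift[OF saM]] by (auto simp: not_le)
    thus ?thesis unfolding eig_shift by auto
  qed
  then obtain mu where mu: "\<And>j. j \<le> m \<Longrightarrow> mu j \<in> eigenvalues M \<and> \<bar>mu j + d j * t\<bar> < kappa m d * t"
    by metis
  have "inj_on mu {0..m}"
  proof (rule inj_onI, rule ccontr)
    fix i j assume ij: "i \<in> {0..m}" "j \<in> {0..m}" "mu i = mu j" "i \<noteq> j"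
    have "\<bar>d i * t - d j * t\<bar> \<le> \<bar>mu i + d i * t\<bar> + \<bar>mu j + d j * t\<bar>" using ij(3) by linarith
    also have "\<dots> < 2 * kappa m d * t" using mu[of i] mu[of j] ij by auto
    finally have "\<bar>d i - d j\<bar> * t < 2 * kappa m d * t" by (simp add: left_diff_distrib[symmetric] abs_mult t less_imp_le)
    hence "\<bar>d i - d j\<bar> < 2 * kappa m d" using t by simp
    thus False using kp(2)[of i j] ij by auto
  qed
  moreover have "mu ` {0..m} \<subseteq> eigenvalues M" using mu by auto
  moreover have "finite (eigenvalues M)" using eig_props[OF saM] by simp
  ultimately have "card {0..m} \<le> card (eigenvalues M)" by (rule card_inj_on_le)
  moreover have "card (eigenvalues M) \<le> m" using eig_props[OF saM] m_def by simp
  ultimately show False by simp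
qed



lemma mulv_bound: "norm ((A::real^'n^'n) *v y) \<le> (real CARD('n) * real CARD('n) * norm A) * norm y"
proof -
  have "\<bar>A $ i $ j\<bar> \<le> norm A" for i j
  proof -
    have "norm (A $ i) \<le> norm A" by (rule Finite_Cartesian_Product.norm_nth_le)
    moreover have "\<bar>A $ i $ j\<bar> \<le> norm (A $ i)" by (rule component_le_norm_cart)
    ultimately show ?thesis by linarith
  qed
  hence "onorm ((*v) A) \<le> real CARD('n) * real CARD('n) * norm A"
    by (rule onorm_le_matrix_component)
  moreover have "norm (A *v y) \<le> onorm ((*v) A) * norm y"
    by (rule onorm[OF matrix_vector_mul_bounded_linear])
  ultimately show ?thesis by (meson mult_right_mono norm_ge_zero order_trans)
qed

lemma armijo_step:
  fixes f :: "real^'n \<Rightarrow> real" and g :: "real^'n \<Rightarrow> real^'n"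
  assumes grad: "\<And>x. (f has_derivative (\<lambda>h. g x \<bullet> h)) (at x)"
    and Lip: "\<And>p q. p \<in> K \<Longrightarrow> q \<in> K \<Longrightarrow> norm (g p - g q) \<le> L * norm (p - q)"
    and L: "L > 0" and xK: "x \<in> K" and segK: "\<And>\<xi>. 0 \<le> \<xi> \<Longrightarrow> \<xi> \<le> gm \<Longrightarrow> x - \<xi> *\<^sub>R w \<in> K"
    and mu0: "mu0 > 0" "mu0 * (w \<bullet> w) \<le> w \<bullet> g x"
    and gm: "gm > 0" "L * gm \<le> 2 / 3 * mu0"
  shows "f (x - gm *\<^sub>R w) - f x \<le> - gm * (w \<bullet> g x) / 3"
proof -
  define \<phi> where "\<phi> s = f (x + s *\<^sub>R (- w))" for s
  have d: "(\<phi> has_real_derivative (g (x + s *\<^sub>R (- w)) \<bullet> (- w))) (at s)" for s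
    unfolding \<phi>_def by (rule D1[OF grad])
  obtain \<xi> where xi: "0 < \<xi>" "\<xi> < gm" "\<phi> gm - \<phi> 0 = (gm - 0) * (g (x + \<xi> *\<^sub>R (- w)) \<bullet> (- w))"
    using MVT2[OF gm(1) d] by blast
  have xw: "x + \<xi> *\<^sub>R (- w) = x - \<xi> *\<^sub>R w" by simp
  have eq: "f (x - gm *\<^sub>R w) - f x = - gm * (g (x - \<xi> *\<^sub>R w) \<bullet> w)"
    using xi(3) unfolding \<phi>_def xw by simp
  have pK: "x - \<xi> *\<^sub>R w \<in> K" using segK xi by simp
  have "norm (g (x - \<xi> *\<^sub>R w) - g x) \<le> L * norm ((x - \<xi> *\<^sub>R w) - x)" by (rule Lip[OF pK xK])
  also have "\<dots> = L * \<xi> * norm w" using xi by simp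
  finally have ng: "norm (g (x - \<xi> *\<^sub>R w) - g x) \<le> L * \<xi> * norm w" .
  have "(g (x - \<xi> *\<^sub>R w) - g x) \<bullet> w \<ge> - (norm (g (x - \<xi> *\<^sub>R w) - g x) * norm w)"
    using Cauchy_Schwarz_ineq2[of "g (x - \<xi> *\<^sub>R w) - g x" w] by linarith
  moreover have "norm (g (x - \<xi> *\<^sub>R w) - g x) * norm w \<le> L * \<xi> * norm w * norm w"
    using ng by (simp add: mult_right_mono)
  moreover have "L * \<xi> * norm w * norm w \<le> L * gm * (w \<bullet> w)"
  proof -
    have "L * \<xi> \<le> L * gm" using L xi by simp
    thus ?thesis by (simp add: mult_right_mono mult.assoc[symmetric] power2_norm_eq_inner[symmetric] power2_eq_square)
  qed
  moreover have "L * gm * (w \<bullet> w) \<le> 2 / 3 * mu0 * (w \<bullet> w)" by (rule mult_right_mono[OF gm(2)]) simp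
  ultimately have "g (x - \<xi> *\<^sub>R w) \<bullet> w \<ge> g x \<bullet> w - 2 / 3 * mu0 * (w \<bullet> w)"
    by (simp add: inner_diff_left)
  hence "g (x - \<xi> *\<^sub>R w) \<bullet> w \<ge> (w \<bullet> g x) / 3" using mu0(2) by (simp add: inner_commute)
  hence "gm * ((w \<bullet> g x) / 3) \<le> gm * (g (x - \<xi> *\<^sub>R w) \<bullet> w)" using gm(1) by (simp add: mult_left_mono)
  thus ?thesis unfolding eq by simp
qed



lemma delta_prop:
  fixes H :: "real^'n \<Rightarrow> real^'n^'n" and g :: "real^'n \<Rightarrow> real^'n"
  assumes saH: "sa ((*v) (H x))" and gx: "g x \<noteq> 0" and inj: "inj_on d {0..CARD('n)}"
  shows "delta_idx H g d tau x \<le> CARD('n) \<and> kappa CARD('n) d * norm (g x) powr tau \<le> minsp (Amat H g d tau x)"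
proof -
  have t: "norm (g x) powr tau > 0" using gx by simp
  from delta_exists[OF saH t inj] have ex: "\<exists>j. j \<le> CARD('n) \<and>
      kappa CARD('n) d * norm (g x) powr tau \<le> minsp (H x + mat (d j * norm (g x) powr tau))" .
  show ?thesis unfolding delta_idx_def Amat_def by (rule LeastI_ex[OF ex])
qed

lemma compact_norm_bound:
  assumes "compact K" "continuous_on K h"
  obtains M where "M > 0" "\<And>x. x \<in> K \<Longrightarrow> norm (h x) \<le> M"
proof -
  have "bounded (h ` K)" by (rule compact_imp_bounded[OF compact_continuous_image[OF assms(2,1)]])
  then obtain M where "M > 0" "\<forall>y\<in>h ` K. norm y \<le> M" unfolding bounded_pos by blast
  thus ?thesis using that by blast
qed

theorem lemma2:
  fixes f :: "real^'n \<Rightarrow> real"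
    and g :: "real^'n \<Rightarrow> real^'n"
    and H :: "real^'n \<Rightarrow> real^'n^'n"
    and d :: "nat \<Rightarrow> real"
    and tau gamma0 :: real
    and B :: "(real^'n) set"
  assumes grad: "\<And>x. (f has_derivative (\<lambda>h. g x \<bullet> h)) (at x)"
    and hess: "\<And>x. (g has_derivative (\<lambda>h. H x *v h)) (at x)"
    and hess_cont: "continuous_on UNIV H"
    and d_distinct: "inj_on d {0..CARD('n)}"
    and tau_pos: "tau > 0"
    and gamma0: "0 < gamma0" "gamma0 < 1"
    and B_compact: "compact B"
    and B_grad: "\<exists>c>0. \<forall>x\<in>B. norm (g x) \<ge> c"
  shows "(\<exists>T>0. \<forall>x\<in>B. sp (Amat H g d tau x) \<le> T \<and> minsp (Amat H g d tau x) \<ge> 1 / T)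
       \<and> (\<exists>c>0. \<forall>x\<in>B. (\<exists>k. armijo f H g d tau gamma0 x k) \<and> gamma_step f H g d tau gamma0 x \<ge> c)"
proof -
  define n where "n = CARD('n)"
  have n1: "n \<ge> 1" unfolding n_def by (simp add: Suc_leI)
  have saH: "\<And>x. sa ((*v) (H x))" unfolding sa_mat using hess_sym[OF grad hess hess_cont] by blast
  have saA: "\<And>x. sa ((*v) (Amat H g d tau x))" unfolding Amat_def by (rule sa_shift[OF saH])
  obtain c where c: "c > 0" "\<And>x. x \<in> B \<Longrightarrow> norm (g x) \<ge> c" using B_grad by blast
  have gne: "g x \<noteq> 0" if "x \<in> B" for x using c(1) c(2)[OF that] by auto
  have contg: "continuous_on UNIV g" by (rule has_derivative_continuous_on[OF hess])
  obtain G where G: "G > 0" "\<And>x. x \<in> B \<Longrightarrow> norm (g x) \<le> G"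
    using compact_norm_bound[OF B_compact continuous_on_subset[OF contg]] by blast
  obtain MH where MH: "MH > 0" "\<And>x. x \<in> B \<Longrightarrow> norm (H x) \<le> MH"
    using compact_norm_bound[OF B_compact continuous_on_subset[OF hess_cont]] by blast
  define kap where "kap = kappa n d"
  have kap: "kap > 0" unfolding kap_def using kappa_props(1)[OF _ n1] d_distinct n_def by simp
  define mu0 where "mu0 = kap * c powr tau"
  have mu0: "mu0 > 0" unfolding mu0_def using kap c by simp
  have tB: "c powr tau \<le> norm (g x) powr tau" "norm (g x) powr tau \<le> G powr tau" if "x \<in> B" for x
    using c(2)[OF that] G(2)[OF that] c(1) tau_pos by (auto intro: powr_mono2)
  have dp: "delta_idx H g d tau x \<le> n \<and> mu0 \<le> minsp (Amat H g d tau x)" if xB: "x \<in> B" for x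
  proof -
    have "delta_idx H g d tau x \<le> n \<and> kap * norm (g x) powr tau \<le> minsp (Amat H g d tau x)"
      using delta_prop[of H x g d tau, OF saH gne[OF xB] d_distinct] unfolding n_def kap_def .
    moreover have "mu0 \<le> kap * norm (g x) powr tau" unfolding mu0_def using tB[OF xB] kap by simp
    ultimately show ?thesis by linarith
  qed
  have eig_lb: "mu0 \<le> \<bar>l\<bar>" if "x \<in> B" "l \<in> eigenvalues (Amat H g d tau x)" for x l
    using dp[OF that(1)] minsp_ge_iff[OF saA] that(2) by blast
  define D where "D = (\<Sum>j\<le>n. \<bar>d j\<bar>)"
  have D: "\<bar>d j\<bar> \<le> D" if "j \<le> n" for j
    unfolding D_def by (rule member_le_sum) (use that in auto)
  define T1 where "T1 = real n * real n * MH + D * G powr tau"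
  define T where "T = max (max T1 (1 / mu0)) 1"
  have T: "T > 0" "T1 \<le> T" "1 / mu0 \<le> T" unfolding T_def by auto
  have part1: "\<forall>x\<in>B. sp (Amat H g d tau x) \<le> T \<and> minsp (Amat H g d tau x) \<ge> 1 / T"
  proof
    fix x assume xB: "x \<in> B"
    define j where "j = delta_idx H g d tau x"
    define t where "t = norm (g x) powr tau"
    have A: "Amat H g d tau x = H x + mat (d j * t)" unfolding Amat_def j_def t_def ..
    have nb: "norm (Amat H g d tau x *v y) \<le> T1 * norm y" for y
    proof -
      have "norm (Amat H g d tau x *v y) = norm (H x *v y + (d j * t) *\<^sub>R y)" unfolding A shift_mulv ..
      also have "\<dots> \<le> norm (H x *v y) + \<bar>d j * t\<bar> * norm y" using norm_triangle_ineq[of "H x *v y" "(d j * t) *\<^sub>R y"] by simp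
      also have "norm (H x *v y) \<le> real n * real n * MH * norm y"
      proof -
        have "norm (H x *v y) \<le> (real n * real n * norm (H x)) * norm y" unfolding n_def by (rule mulv_bound)
        also have "\<dots> \<le> real n * real n * MH * norm y" using MH(2)[OF xB]
          by (intro mult_right_mono mult_left_mono) auto
        finally show ?thesis .
      qed
      also have "\<bar>d j * t\<bar> \<le> D * G powr tau"
      proof -
        have "\<bar>d j * t\<bar> = \<bar>d j\<bar> * t" unfolding t_def by (simp add: abs_mult)
        also have "\<dots> \<le> D * G powr tau" using D[of j] dp[OF xB] tB(2)[OF xB] unfolding j_def t_def
          by (intro mult_mono) auto
        finally show ?thesis .
      qed
      finally show ?thesis unfolding T1_def by (simp add: algebra_simps mult_right_mono)
    qed
    have "sp (Amat H g d tau x) \<le> T1" unfolding sp_le_iff[OF saA] using eig_bound[OF _ nb] by blast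
    moreover have "1 / T \<le> mu0"
    proof -
      have "1 / T \<le> 1 / (1 / mu0)" using T mu0 by (intro divide_left_mono) auto
      thus ?thesis by simp
    qed
    ultimately show "sp (Amat H g d tau x) \<le> T \<and> minsp (Amat H g d tau x) \<ge> 1 / T"
      using T dp[OF xB] by linarith
  qed
  have "bounded B" by (rule compact_imp_bounded[OF B_compact])
  then obtain r0 where r0: "r0 > 0" "\<And>x. x \<in> B \<Longrightarrow> norm x \<le> r0" unfolding bounded_pos by blast
  define R where "R = G / mu0"
  have R: "R > 0" unfolding R_def using G mu0 by simp
  define K where "K = cball (0::real^'n) (r0 + R)"
  have K: "compact K" "convex K" unfolding K_def by auto
  obtain MK where MK: "MK > 0" "\<And>x. x \<in> K \<Longrightarrow> norm (H x) \<le> MK"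
    using compact_norm_bound[OF K(1) continuous_on_subset[OF hess_cont]] by blast
  define L where "L = real n * real n * MK"
  have L: "L > 0" unfolding L_def using n1 MK by simp
  have Lip: "norm (g p - g q) \<le> L * norm (p - q)" if "p \<in> K" "q \<in> K" for p q
  proof (rule differentiable_bound[OF K(2) _ _ that])
    fix y assume "y \<in> K"
    show "(g has_derivative (\<lambda>h. H y *v h)) (at y within K)" by (rule has_derivative_subset[OF hess]) simp
    show "onorm (\<lambda>h. H y *v h) \<le> L"
    proof (rule onorm_le)
      fix h
      have "norm (H y *v h) \<le> (real n * real n * norm (H y)) * norm h" unfolding n_def by (rule mulv_bound)
      also have "\<dots> \<le> L * norm h" unfolding L_def using MK(2)[OF \<open>y \<in> K\<close>]
        by (intro mult_right_mono mult_left_mono) auto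
      finally show "norm (H y *v h) \<le> L * norm h" .
    qed
  qed
  obtain k0 where k0: "gamma0 * L * 3 / (2 * mu0) < 3 ^ k0" using real_arch_pow[of 3] by force
  define gm0 where "gm0 = gamma0 / 3 ^ k0"
  have gm0: "gm0 > 0" "gm0 \<le> gamma0" unfolding gm0_def using gamma0 by (auto simp: divide_le_eq)
  have Lgm0: "L * gm0 \<le> 2 / 3 * mu0"
  proof -
    have "gamma0 * L * 3 < 3 ^ k0 * (2 * mu0)" using k0 mu0 by (simp add: divide_less_eq)
    thus ?thesis unfolding gm0_def using mu0 by (simp add: field_simps)
  qed
  have arm: "armijo f H g d tau gamma0 x k0" if xB: "x \<in> B" for x
  proof -
    define M where "M = Amat H g d tau x"
    define v where "v = matrix_inv M *v g x"
    define w where "w = pr_pos M v - pr_neg M v"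
    have vw: "vdir H g d tau x = v" "wdir H g d tau x = w" unfolding vdir_def wdir_def v_def w_def M_def by simp_all
    have dpr: "M *v v = g x" "mu0 * (v \<bullet> v) \<le> w \<bullet> g x" "norm w = norm v" "mu0 * norm v \<le> norm (g x)"
      using dir_props[where M="Amat H g d tau x" and mu=mu0 and gv="g x", OF saA mu0 eig_lb[OF xB]] unfolding v_def w_def M_def by blast+
    have ww: "w \<bullet> w = v \<bullet> v" using dpr(3) by (simp add: norm_eq_sqrt_inner)
    have nw: "norm w \<le> R"
    proof -
      have "mu0 * norm w \<le> G" using dpr(3,4) G(2)[OF xB] by simp
      thus ?thesis unfolding R_def using mu0 by (simp add: field_simps)
    qed
    have xK: "x \<in> K" unfolding K_def using r0(2)[OF xB] R by simp
    have segK: "x - \<xi> *\<^sub>R w \<in> K" if "0 \<le> \<xi>" "\<xi> \<le> gm0" for \<xi>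
    proof -
      have "norm (x - \<xi> *\<^sub>R w) \<le> norm x + \<xi> * norm w" using norm_triangle_ineq4[of x "\<xi> *\<^sub>R w"] that by simp
      also have "\<xi> * norm w \<le> 1 * R" using that gm0 gamma0 nw by (intro mult_mono) auto
      finally show ?thesis unfolding K_def using r0(2)[OF xB] by simp
    qed
    have "f (x - gm0 *\<^sub>R w) - f x \<le> - gm0 * (w \<bullet> g x) / 3"
      by (rule armijo_step[OF grad Lip L xK segK mu0 _ gm0(1) Lgm0]) (use dpr(2) ww in auto)
    thus ?thesis unfolding armijo_def Let_def vw gm0_def .
  qed
  have part2: "\<forall>x\<in>B. (\<exists>k. armijo f H g d tau gamma0 x k) \<and> gamma_step f H g d tau gamma0 x \<ge> gm0"
  proof
    fix x assume xB: "x \<in> B"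
    have le: "(LEAST k. armijo f H g d tau gamma0 x k) \<le> k0" by (rule Least_le[where P="armijo f H g d tau gamma0 x", OF arm[OF xB]])
    have "gamma0 / 3 ^ k0 \<le> gamma0 / 3 ^ (LEAST k. armijo f H g d tau gamma0 x k)"
      using gamma0 le by (intro divide_left_mono power_increasing) auto
    thus "(\<exists>k. armijo f H g d tau gamma0 x k) \<and> gamma_step f H g d tau gamma0 x \<ge> gm0"
      using arm[OF xB] unfolding gamma_step_def gm0_def by blast
  qed
  show ?thesis using part1 part2 T(1) gm0(1) by blast
qed

end
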